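(* Let $\mathcal{C}[\cdot]$ be a certified admitted linear guarded one-hole context with hole type $\mathbb{B}_{M_Y}(Y)\to\mathbb{B}_{M_X}(X)$, with perturbation gain $L(\mathcal{C})<\infty$ and closed-context contraction modulus $\kappa(\mathcal{C})<1$. Let $\mathsf{M},\mathsf{N}$ be components whose transformers $\mathcal{T}_{\mathsf M},\mathcal{T}_{\mathsf N}:\mathbb{B}_{M_Y}(Y)\to\mathbb{B}_{M_X}(X)$ have this hole type, with all side components and certificates identical in the two circuits $\mathcal{C}[\mathsf M]$, $\mathcal{C}[\mathsf N]$, and assume the induced closed-loop operators $\mathcal{T}_{\mathcal{C}[\mathsf M]},\mathcal{T}_{\mathcal{C}[\mathsf N]}$ are self-maps of a common ball $\mathbb{B}_M(S)$ and are $\kappa(\mathcal{C})$-contractions there; let $V_{\mathcal{C}[\mathsf M]},V_{\mathcal{C}[\mathsf N]}$ be their unique fixed points. If $d_\infty^{X\leftarrow Y}(\mathcal{T}_{\mathsf M},\mathcal{T}_{\mathsf N})\le\varepsilon$, then \[\|V_{\mathcal{C}[\mathsf M]}-V_{\mathcal{C}[\mathsf N]}\|_\infty\le\frac{L(\mathcal{C})}{1-\kappa(\mathcal{C})}\,\varepsilon.\]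
   Context: For a measurable space $X$, $\mathcal{B}(X)$ is the space of bounded measurable real functions with sup norm and $\mathbb{B}_M(X):=\{V\in\mathcal{B}(X):\|V\|_\infty\le M\}$. For typed transformers $T,T':\mathbb{B}_{M_Y}(Y)\to\mathbb{B}_{M_X}(X)$, $d_\infty^{X\leftarrow Y}(T,T'):=\sup_{V\in\mathbb{B}_{M_Y}(Y)}\|TV-T'V\|_\infty$ (written $d_\infty^{(S,M)}$ when $X=Y=S$, $M_X=M_Y=M$). A linear one-hole context is a well-typed expression generated by $\mathcal{C}::=[\cdot]\mid T_0\circ\mathcal{C}\mid\mathcal{C}\circ T_0\mid\mathcal{C}\otimes T_0\mid T_0\otimes\mathcal{C}\mid\mathsf{Tr}^Z(\mathcal{D})$, where $T_0$ are fixed side transformers, $\otimes$ uses the product sup metric, $\mathsf{Tr}^Z$ is the guarded Banach trace (for $F=(F_Y,F_Z):X\times Z\to Y\times Z$ with $F_Z$ uniformly contractive in $z$, $\mathsf{Tr}^Z(F)(x)=F_Y(x,z_x)$ where $z_x=F_Z(x,z_x)$ is the unique fixed point), and the hole occurs exactly once (no copying, merging, or nonlinear inspection of the hole). It is certified/admitted if every subexpression carries invariant source/target balls, Lipschitz constants for side transformers, uniform guardedness constants at each trace node, and a finite perturbation gain $L(\mathcal{C})$ with the property that $d_\infty^{(S,M)}(\mathcal{T}_{\mathcal{C}[\mathsf M]},\mathcal{T}_{\mathcal{C}[\mathsf N]})\le L(\mathcal{C})\,d_\infty^{X\leftarrow Y}(\mathcal{T}_{\mathsf M},\mathcal{T}_{\mathsf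 N})$ for all compatible components $\mathsf M,\mathsf N$ with the hole type, and (for a closed context) a contraction modulus $\kappa(\mathcal{C})<1$ of the induced closed-loop operator on its invariant ball. *)

theory Defs
  imports "HOL-Analysis.Analysis"
begin

text \<open>Sup norm of a real function on the points of a measurable space, valued in
  ennreal (so that it is always defined, and equals 0 on an empty space).\<close>
definition supnorm :: "'a measure \<Rightarrow> ('a \<Rightarrow> real) \<Rightarrow> ennreal" where
  "supnorm X f = (SUP x\<in>space X. ennreal \<bar>f x\<bar>)"

definition bball :: "'a measure \<Rightarrow> real \<Rightarrow> ('a \<Rightarrow> real) set" where
  "bball X M = {V. V \<in> borel_measurable X \<and> (\<forall>x\<in>space X. \<bar>V x\<bar> \<le> M)}"

definition transformer ::
    "'y measure \<Rightarrow> real \<Rightarrow> 'x measure \<Rightarrow> real \<Rightarrow> (('y \<Rightarrow> real) \<Rightarrow> ('x \<Rightarrow> real)) \<Rightarrow> bool" where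
  "transformer Y MY X MX T \<longleftrightarrow> (\<forall>V\<in>bball Y MY. T V \<in> bball X MX)"

definition dinf ::
    "'y measure \<Rightarrow> real \<Rightarrow> 'x measure \<Rightarrow> (('y \<Rightarrow> real) \<Rightarrow> ('x \<Rightarrow> real))
       \<Rightarrow> (('y \<Rightarrow> real) \<Rightarrow> ('x \<Rightarrow> real)) \<Rightarrow> ennreal" where
  "dinf Y MY X T T' = (SUP V\<in>bball Y MY. supnorm X (\<lambda>x. T V x - T' V x))"

text \<open>A certified linear one-hole context, viewed semantically: the map ctx sending the
  transformer of the component plugged into the hole (of hole type
  B_{MY}(Y) -> B_{MX}(X)) to the induced closed-loop operator on functions on S,
  together with its certified finite perturbation gain L.\<close>
definition certified_gain ::
    "'y measure \<Rightarrow> real \<Rightarrow> 'x measure \<Rightarrow> real \<Rightarrow> 's measure \<Rightarrow> real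
      \<Rightarrow> ((('y \<Rightarrow> real) \<Rightarrow> ('x \<Rightarrow> real)) \<Rightarrow> (('s \<Rightarrow> real) \<Rightarrow> ('s \<Rightarrow> real))) \<Rightarrow> real \<Rightarrow> bool" where
  "certified_gain Y MY X MX S M ctx L \<longleftrightarrow> 0 \<le> L \<and>
     (\<forall>T T'. transformer Y MY X MX T \<longrightarrow> transformer Y MY X MX T' \<longrightarrow>
        dinf S M S (ctx T) (ctx T') \<le> ennreal L * dinf Y MY X T T')"

definition contraction_on_ball ::
    "'s measure \<Rightarrow> real \<Rightarrow> (('s \<Rightarrow> real) \<Rightarrow> ('s \<Rightarrow> real)) \<Rightarrow> real \<Rightarrow> bool" where
  "contraction_on_ball S M T \<kappa> \<longleftrightarrow>
     (\<forall>V\<in>bball S M. T V \<in> bball S M) \<and>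
     (\<forall>V\<in>bball S M. \<forall>W\<in>bball S M.
        supnorm S (\<lambda>s. T V s - T W s) \<le> ennreal \<kappa> * supnorm S (\<lambda>s. V s - W s))"

end

theory Submission
  imports Defs
begin


lemma supnorm_tri: "supnorm S (\<lambda>s. u s + v s) \<le> supnorm S u + supnorm S v"
  unfolding supnorm_def
proof (rule SUP_least)
  fix x assume x: "x \<in> space S"
  have "ennreal \<bar>u x + v x\<bar> \<le> ennreal (\<bar>u x\<bar> + \<bar>v x\<bar>)" by (rule ennreal_leI) (rule abs_triangle_ineq)
  also have "\<dots> = ennreal \<bar>u x\<bar> + ennreal \<bar>v x\<bar>" by (simp add: ennreal_plus)
  also have "\<dots> \<le> (SUP x\<in>space S. ennreal \<bar>u x\<bar>) + (SUP x\<in>space S. ennreal \<bar>v x\<bar>)"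
    by (intro add_mono SUP_upper x)
  finally show "ennreal \<bar>u x + v x\<bar> \<le> (SUP x\<in>space S. ennreal \<bar>u x\<bar>) + (SUP x\<in>space S. ennreal \<bar>v x\<bar>)" .
qed

lemma supnorm_bound: "(\<And>x. x \<in> space S \<Longrightarrow> \<bar>u x\<bar> \<le> B) \<Longrightarrow> supnorm S u \<le> ennreal B"
  unfolding supnorm_def by (rule SUP_least) (simp add: ennreal_leI)

theorem theorem5:
  fixes Y :: "'y measure" and X :: "'x measure" and S :: "'s measure"
    and MY MX M L \<kappa> \<epsilon> :: real
    and ctx :: "(('y \<Rightarrow> real) \<Rightarrow> ('x \<Rightarrow> real)) \<Rightarrow> (('s \<Rightarrow> real) \<Rightarrow> ('s \<Rightarrow> real))"
    and TM TN :: "('y \<Rightarrow> real) \<Rightarrow> ('x \<Rightarrow> real)"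
    and VM VN :: "'s \<Rightarrow> real"
  assumes gain: "certified_gain Y MY X MX S M ctx L"
    and kappa: "0 \<le> \<kappa>" "\<kappa> < 1"
    and TM: "transformer Y MY X MX TM" and TN: "transformer Y MY X MX TN"
    and contrM: "contraction_on_ball S M (ctx TM) \<kappa>"
    and contrN: "contraction_on_ball S M (ctx TN) \<kappa>"
    and fixM: "VM \<in> bball S M" "ctx TM VM = VM"
    and fixN: "VN \<in> bball S M" "ctx TN VN = VN"
    and eps: "dinf Y MY X TM TN \<le> ennreal \<epsilon>"
  shows "supnorm S (\<lambda>s. VM s - VN s) \<le> ennreal (L / (1 - \<kappa>) * \<epsilon>)"
proof -
  define d where "d = supnorm S (\<lambda>s. VM s - VN s)"
  have "\<And>s. VM s - VN s = (ctx TM VM s - ctx TM VN s) + (ctx TM VN s - ctx TN VN s)"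
    using fixM(2) fixN(2) by simp
  hence "d = supnorm S (\<lambda>s. (ctx TM VM s - ctx TM VN s) + (ctx TM VN s - ctx TN VN s))"
    unfolding d_def by presburger
  also have "\<dots> \<le> supnorm S (\<lambda>s. ctx TM VM s - ctx TM VN s) + supnorm S (\<lambda>s. ctx TM VN s - ctx TN VN s)"
    by (rule supnorm_tri)
  also have "supnorm S (\<lambda>s. ctx TM VM s - ctx TM VN s) \<le> ennreal \<kappa> * d"
    using contrM fixM(1) fixN(1) unfolding contraction_on_ball_def d_def by blast
  also have "supnorm S (\<lambda>s. ctx TM VN s - ctx TN VN s) \<le> dinf S M S (ctx TM) (ctx TN)"
    unfolding dinf_def by (rule SUP_upper) (rule fixN(1))
  also have "\<dots> \<le> ennreal L * dinf Y MY X TM TN"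
    using gain TM TN unfolding certified_gain_def by blast
  also have "\<dots> \<le> ennreal L * ennreal \<epsilon>" by (intro mult_left_mono eps) simp
  finally have main: "d \<le> ennreal \<kappa> * d + ennreal L * ennreal \<epsilon>" by simp
  have L0: "0 \<le> L" using gain unfolding certified_gain_def by simp
  have "d \<le> ennreal (M + M)"
    unfolding d_def
  proof (rule supnorm_bound)
    fix x assume "x \<in> space S"
    then have "\<bar>VM x\<bar> \<le> M" "\<bar>VN x\<bar> \<le> M" using fixM(1) fixN(1) unfolding bball_def by auto
    then show "\<bar>VM x - VN x\<bar> \<le> M + M" by linarith
  qed
  then have "d \<noteq> top" by (metis ennreal_neq_top neq_top_trans)
  then obtain r where r: "d = ennreal r" "0 \<le> r" by (cases d rule: ennreal_cases) auto
  show ?thesis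
  proof (cases "\<epsilon> \<ge> 0")
    case True
    have e1: "ennreal (\<kappa> * r + L * \<epsilon>) = ennreal (\<kappa> * r) + ennreal (L * \<epsilon>)"
      using kappa L0 True r(2) by (intro ennreal_plus) auto
    have "ennreal r \<le> ennreal (\<kappa> * r) + ennreal (L * \<epsilon>)"
      using main r kappa L0 True by (simp add: ennreal_mult)
    then have "ennreal r \<le> ennreal (\<kappa> * r + L * \<epsilon>)" using e1 by simp
    then have "r \<le> \<kappa> * r + L * \<epsilon>" using kappa L0 True r(2)
      by (subst (asm) ennreal_le_iff) auto
    then have "r * (1 - \<kappa>) \<le> L * \<epsilon>" by (simp add: algebra_simps)
    then have "r \<le> L / (1 - \<kappa>) * \<epsilon>" using kappa by (simp add: field_simps)
    then show ?thesis unfolding d_def[symmetric] r(1) by (simp add: ennreal_leI)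
  next
    case False
    then have "ennreal \<epsilon> = 0" by (simp add: ennreal_eq_0_iff)
    then have "ennreal r \<le> ennreal (\<kappa> * r)" using main r kappa by (simp add: ennreal_mult)
    then have "r \<le> \<kappa> * r" using kappa r(2) by (simp add: ennreal_le_iff)
    then have "r = 0" using kappa r(2) by (metis mult_le_cancel_right1 not_le order_antisym)
    then show ?thesis unfolding d_def[symmetric] r(1) by simp
  qed
qed

end
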